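(* Let $\mathcal{A}=\{A_1,\dots,A_l\}$ be a finite family of real $n\times n$ matrices, each having a strictly dominant eigenvalue $\lambda_i$. For each $i$ let $\hat r_i$ and $\hat h_i$ be arbitrary nonzero right and left eigenvectors of $A_i$ for $\lambda_i$ (so $A_i\hat r_i=\lambda_i\hat r_i$, $\hat h_i^TA_i=\lambda_i\hat h_i^T$). Construct vectors $\tilde h_1,\dots,\tilde h_l$ and $\tilde r_1,\dots,\tilde r_l$ as follows: $\tilde h_1:=\hat h_1$; for each $k$, $\tilde r_k\in\{\hat r_k,-\hat r_k\}$ is chosen such that $\langle\tilde h_1,\tilde r_k\rangle\ge0$; for each $j>1$, $\tilde h_j\in\{\hat h_j,-\hat h_j\}$ is chosen such that $\langle\tilde h_j,\tilde r_j\rangle\ge0$ (any admissible choice when there is ambiguity). Let $\tilde R\in\mathbb{R}^{n\times l}$ have columns $\tilde r_k$ and $\tilde H\in\mathbb{R}^{l\times n}$ have rows $\tilde h_j^T$, and set $\mathcal{K}_{inner}(\mathcal{A}):=\{\tilde Rp:p\ge0\}$, $\mathcal{K}_{outer}(\mathcal{A}):=\{r:\tilde Hr\ge0\}$. Suppose there exists $R\in\mathbb{R}^{n\times m}$ such that $\{Rp:p\ge0\}$ is a proper cone and for each $i$ there exist $\alpha_i\in\mathbb{R}$ and $P_i\in\mathbb{R}^{m\times m}$ with all entries strictly positive such that $(\alpha_iI+A_i)R=RP_i$. Then $\langle\tilde h_j,\tilde r_k\rangle>0$ for all $j,k$, i.e. $\tilde H\tilde R>0$ entrywise; equivalently, every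 $r\in\mathcal{K}_{inner}(\mathcal{A})\setminus\{0\}$ lies in $\operatorname{int}(\mathcal{K}_{outer}(\mathcal{A}))$.
   Context: Inequalities between vectors/matrices are entrywise. A proper cone is a set $\mathcal{K}\subseteq\mathbb{R}^n$ closed under nonnegative linear combinations, with nonempty interior, and such that $r\in\mathcal{K}\setminus\{0\}$ implies $-r\notin\mathcal{K}$. A real square matrix $A$ has a strictly dominant eigenvalue if it has a real, algebraically simple eigenvalue $\lambda$ with $\operatorname{Re}\mu<\lambda$ for every other eigenvalue $\mu$. *)

theory Defs
  imports "HOL-Analysis.Analysis" "HOL-Computational_Algebra.Polynomial"
begin

definition charpoly :: "real^'n^'n \<Rightarrow> complex poly" where
  "charpoly A = det (\<chi> i j. (if i = j then [:0, 1:] else 0) - [:complex_of_real (A $ i $ j):])"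

definition strictly_dominant_eig :: "real^'n^'n \<Rightarrow> real \<Rightarrow> bool" where
  "strictly_dominant_eig A lam \<longleftrightarrow>
     poly (charpoly A) (complex_of_real lam) = 0 \<and>
     order (complex_of_real lam) (charpoly A) = 1 \<and>
     (\<forall>\<mu>. poly (charpoly A) \<mu> = 0 \<and> \<mu> \<noteq> complex_of_real lam \<longrightarrow> Re \<mu> < lam)"

definition proper_cone :: "('a::real_normed_vector) set \<Rightarrow> bool" where
  "proper_cone K \<longleftrightarrow>
     (\<forall>x\<in>K. \<forall>y\<in>K. \<forall>a b::real. a \<ge> 0 \<and> b \<ge> 0 \<longrightarrow> a *\<^sub>R x + b *\<^sub>R y \<in> K) \<and>
     interior K \<noteq> {} \<and>
     (\<forall>r\<in>K. r \<noteq> 0 \<longrightarrow> - r \<notin> K)"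

end

theory Submission imports Defs begin

lemma charpoly_real:
  fixes A :: "real^'n^'n"
  shows "poly (charpoly A) (complex_of_real mu) = complex_of_real (det (mu *\<^sub>R mat 1 - A))"
  unfolding charpoly_def det_def
  by (auto simp: poly_sum poly_prod of_real_sum of_real_prod mat_def intro!: sum.cong prod.cong)

lemma eig_root:
  fixes A :: "real^'n^'n"
  assumes "v \<noteq> 0" "A *v v = mu *\<^sub>R v"
  shows "poly (charpoly A) (complex_of_real mu) = 0"
proof -
  have "(mu *\<^sub>R mat 1 - A) *v v = 0"
    using assms by (simp add: matrix_vector_mult_diff_rdistrib scaleR_matrix_vector_assoc[symmetric])
  hence "\<not> (\<exists>B. B ** (mu *\<^sub>R mat 1 - A) = mat 1)"
    using assms(1) matrix_left_invertible_ker by blast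
  hence "\<not> invertible (mu *\<^sub>R mat 1 - A)" unfolding invertible_def by blast
  hence "det (mu *\<^sub>R mat 1 - A) = 0" using invertible_det_nz by blast
  thus ?thesis by (simp add: charpoly_real)
qed

lemma Pv_pos:
  fixes P :: "real^'m^'m"
  assumes P: "\<And>a b. P $ a $ b > 0" and x0: "\<And>a. x $ a \<ge> 0" and xne: "x \<noteq> 0"
  shows "(P *v x) $ b > 0"
proof -
  obtain a where a: "x $ a \<noteq> 0" using xne by (metis vec_eq_iff zero_index)
  hence "x $ a > 0" using x0[of a] by linarith
  hence "0 < P $ b $ a * x $ a" using P by simp
  thus ?thesis unfolding matrix_vector_mult_def
    by (auto intro!: sum_pos2[of UNIV a] simp: x0 P less_imp_le)
qed

lemma perron_exists:
  fixes P :: "real^'m^'m"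
  assumes P: "\<And>a b. P $ a $ b > 0"
  obtains x rho where "\<And>a. x $ a > 0" "P *v x = rho *\<^sub>R x" "rho > 0"
proof -
  define S where "S = {x::real^'m. (\<forall>a. 0 \<le> x $ a) \<and> sum (\<lambda>a. x $ a) UNIV = 1}"
  define f where "f = (\<lambda>x::real^'m. (1 / sum (\<lambda>a. (P *v x) $ a) UNIV) *\<^sub>R (P *v x))"
  have Sne0: "x \<noteq> 0" if "x \<in> S" for x using that by (auto simp: S_def)
  have spos: "sum (\<lambda>a. (P *v x) $ a) UNIV > 0" if "x \<in> S" for x
    using that Sne0[OF that] Pv_pos[OF P] by (auto simp: S_def intro!: sum_pos)
  have cS: "closed S"
  proof -
    have "S = (\<Inter>a. {x. 0 \<le> x $ a}) \<inter> {x. sum (\<lambda>a. x $ a) UNIV = 1}" by (auto simp: S_def)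
    also have "closed \<dots>"
      by (intro closed_Int closed_INT ballI closed_Collect_le closed_Collect_eq continuous_intros)
    finally show ?thesis .
  qed
  have bS: "bounded S"
  proof -
    have "norm x \<le> 1" if "x \<in> S" for x
    proof -
      have "norm x \<le> sum (\<lambda>a. \<bar>x $ a\<bar>) UNIV" by (rule norm_le_l1_cart)
      also have "\<dots> = 1" using that by (auto simp: S_def)
      finally show ?thesis .
    qed
    thus ?thesis unfolding bounded_iff by blast
  qed
  have convS: "convex S"
    unfolding convex_def S_def
    by (auto simp: sum.distrib sum_distrib_left[symmetric])
  have neS: "S \<noteq> {}"
  proof -
    have "(\<chi> a. 1 / real CARD('m)) \<in> S" by (auto simp: S_def)
    thus ?thesis by blast
  qed
  have contf: "continuous_on S f"
    unfolding f_def using spos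
    by (intro continuous_intros) (auto dest!: spos)
  have fS: "f \<in> S \<rightarrow> S"
  proof
    fix x assume x: "x \<in> S"
    have "\<forall>a. 0 \<le> f x $ a" using spos[OF x] Pv_pos[OF P] x Sne0[OF x]
      by (auto simp: f_def S_def less_imp_le)
    moreover have "sum (\<lambda>a. f x $ a) UNIV = 1"
      using spos[OF x] by (simp add: f_def sum_divide_distrib[symmetric])
    ultimately show "f x \<in> S" by (simp add: S_def)
  qed
  obtain x where x: "x \<in> S" "f x = x" using brouwer[OF compact_eq_bounded_closed[THEN iffD2] convS neS contf fS] cS bS by blast
  let ?s = "sum (\<lambda>a. (P *v x) $ a) UNIV"
  have "P *v x = ?s *\<^sub>R x"
    using x(2) spos[OF x(1)] unfolding f_def by (metis (no_types, lifting) divide_eq_0_iff less_irrefl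
        scaleR_one scaleR_scaleR nonzero_mult_div_cancel_left mult.commute times_divide_eq_right)
  moreover have "x $ a > 0" for a
  proof -
    have "x $ a = f x $ a" using x(2) by simp
    also have "\<dots> > 0" using spos[OF x(1)] Pv_pos[OF P] x(1) Sne0[OF x(1)] by (auto simp: f_def S_def)
    finally show ?thesis .
  qed
  ultimately show ?thesis using that spos[OF x(1)] by blast
qed

lemma tri_eq:
  fixes c :: "'a \<Rightarrow> real"
  assumes "finite A" "\<bar>sum c A\<bar> = sum (\<lambda>a. \<bar>c a\<bar>) A"
  shows "(\<forall>a\<in>A. c a \<ge> 0) \<or> (\<forall>a\<in>A. c a \<le> 0)"
proof (cases "sum c A \<ge> 0")
  case True
  hence "sum (\<lambda>a. \<bar>c a\<bar> - c a) A = 0" using assms(2) by (simp add: sum_subtractf)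
  hence "\<forall>a\<in>A. \<bar>c a\<bar> - c a = 0" using assms(1) by (subst (asm) sum_nonneg_eq_0_iff) auto
  thus ?thesis by auto
next
  case False
  hence "sum (\<lambda>a. \<bar>c a\<bar> + c a) A = 0" using assms(2) by (simp add: sum.distrib)
  hence "\<forall>a\<in>A. \<bar>c a\<bar> + c a = 0" using assms(1) by (subst (asm) sum_nonneg_eq_0_iff) auto
  thus ?thesis by auto
qed

lemma left_eig:
  fixes P :: "real^'m^'m" and x y :: "real^'m"
  assumes P: "\<And>a b. P $ a $ b > 0" and x: "\<And>a. x $ a > 0" and Px: "P *v x = rho *\<^sub>R x"
    and y0: "y \<noteq> 0" and yP: "y v* P = beta *\<^sub>R y"
  shows "\<bar>beta\<bar> \<le> rho" "beta = rho \<Longrightarrow> (\<forall>a. y $ a > 0) \<or> (\<forall>a. y $ a < 0)"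
proof -
  define T where "T b = (\<Sum>a\<in>UNIV. P $ a $ b * \<bar>y $ a\<bar>)" for b
  have yPb: "(\<Sum>a\<in>UNIV. P $ a $ b * y $ a) = beta * y $ b" for b
    using yP by (simp add: vec_eq_iff vector_matrix_mult_def mult.commute)
  have Pxa: "(\<Sum>b\<in>UNIV. P $ a $ b * x $ b) = rho * x $ a" for a
    using Px by (simp add: vec_eq_iff matrix_vector_mult_def)
  have Tb: "\<bar>beta\<bar> * \<bar>y $ b\<bar> \<le> T b" for b
  proof -
    have "\<bar>beta\<bar> * \<bar>y $ b\<bar> = \<bar>\<Sum>a\<in>UNIV. P $ a $ b * y $ a\<bar>" by (simp add: yPb abs_mult)
    also have "\<dots> \<le> (\<Sum>a\<in>UNIV. \<bar>P $ a $ b * y $ a\<bar>)" by (rule sum_abs)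
    also have "\<dots> = T b" unfolding T_def using P by (simp add: abs_mult less_imp_le)
    finally show ?thesis .
  qed
  have sumT: "(\<Sum>b\<in>UNIV. T b * x $ b) = rho * (\<Sum>a\<in>UNIV. \<bar>y $ a\<bar> * x $ a)"
  proof -
    have "(\<Sum>b\<in>UNIV. T b * x $ b) = (\<Sum>b\<in>UNIV. \<Sum>a\<in>UNIV. \<bar>y $ a\<bar> * (P $ a $ b * x $ b))"
      unfolding T_def by (simp add: sum_distrib_right sum_distrib_left mult_ac)
    also have "\<dots> = (\<Sum>a\<in>UNIV. \<Sum>b\<in>UNIV. \<bar>y $ a\<bar> * (P $ a $ b * x $ b))" by (rule sum.swap)
    also have "\<dots> = (\<Sum>a\<in>UNIV. \<bar>y $ a\<bar> * (rho * x $ a))" by (simp add: sum_distrib_left[symmetric] Pxa)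
    finally show ?thesis by (simp add: sum_distrib_left mult_ac)
  qed
  obtain a0 where a0: "y $ a0 \<noteq> 0" using y0 by (metis vec_eq_iff zero_index)
  have Wpos: "(\<Sum>a\<in>UNIV. \<bar>y $ a\<bar> * x $ a) > 0"
    using a0 x by (intro sum_pos2[of UNIV a0]) (auto simp: less_imp_le)
  have "\<bar>beta\<bar> * (\<Sum>a\<in>UNIV. \<bar>y $ a\<bar> * x $ a) \<le> (\<Sum>b\<in>UNIV. T b * x $ b)"
    unfolding sum_distrib_left using Tb x
    by (intro sum_mono) (metis mult.assoc mult_right_mono less_imp_le)
  thus bnd: "\<bar>beta\<bar> \<le> rho" using Wpos sumT by simp
  assume br: "beta = rho"
  have "(\<Sum>b\<in>UNIV. (T b - \<bar>beta\<bar> * \<bar>y $ b\<bar>) * x $ b) = 0"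
    using sumT br bnd by (simp add: algebra_simps sum_subtractf sum_distrib_left)
  hence "\<forall>b\<in>UNIV. (T b - \<bar>beta\<bar> * \<bar>y $ b\<bar>) * x $ b = 0"
    using Tb x by (subst (asm) sum_nonneg_eq_0_iff) (auto simp: less_imp_le)
  hence Teq: "T b = \<bar>beta\<bar> * \<bar>y $ b\<bar>" for b using x[of b] by auto
  define b0 :: 'm where "b0 = undefined"
  have "\<bar>\<Sum>a\<in>UNIV. P $ a $ b0 * y $ a\<bar> = (\<Sum>a\<in>UNIV. \<bar>P $ a $ b0 * y $ a\<bar>)"
    using Teq[of b0] P unfolding T_def by (simp add: yPb abs_mult less_imp_le)
  hence "(\<forall>a. P $ a $ b0 * y $ a \<ge> 0) \<or> (\<forall>a. P $ a $ b0 * y $ a \<le> 0)"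
    using tri_eq[of UNIV "\<lambda>a. P $ a $ b0 * y $ a"] by simp
  hence sg: "(\<forall>a. y $ a \<ge> 0) \<or> (\<forall>a. y $ a \<le> 0)"
    using P by (auto simp: zero_le_mult_iff mult_le_0_iff) (meson not_less)+
  have nz: "y $ b \<noteq> 0" for b
  proof
    assume yb: "y $ b = 0"
    have "T b > 0" unfolding T_def using a0 P
      by (intro sum_pos2[of UNIV a0]) (auto simp: less_imp_le)
    thus False using Teq[of b] yb by simp
  qed
  show "(\<forall>a. y $ a > 0) \<or> (\<forall>a. y $ a < 0)"
    using sg nz by (metis less_eq_real_def)
qed

lemma cone_inj:
  fixes R :: "real^'m^'n"
  assumes int: "interior {R *v p | p. \<forall>a. p $ a \<ge> 0} \<noteq> {}"
  shows "h v* R = 0 \<Longrightarrow> h = 0"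
proof (rule ccontr)
  assume hR: "h v* R = 0" and h0: "h \<noteq> 0"
  let ?K = "{R *v p | p. \<forall>a. p $ a \<ge> 0}"
  have orth: "inner h z = 0" if "z \<in> ?K" for z
    using that hR by (auto simp: dot_lmul_matrix[symmetric])
  obtain z where z: "z \<in> interior ?K" using int by blast
  then obtain e where e: "e > 0" "ball z e \<subseteq> ?K" using mem_interior by blast
  define z' where "z' = z + (e / 2 / norm h) *\<^sub>R h"
  have "dist z z' < e" using e h0 by (simp add: z'_def dist_norm)
  hence "z' \<in> ?K" using e by auto
  moreover have "z \<in> ?K" using e(2) \<open>e > 0\<close> centre_in_ball by blast
  ultimately have "inner h z' = 0" "inner h z = 0" using orth by auto
  hence "(e / 2 / norm h) * inner h h = 0" by (simp add: z'_def inner_add_right)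
  thus False using e h0 by simp
qed

lemma cone_Rx:
  fixes R :: "real^'m^'n" and x :: "real^'m"
  assumes cone: "proper_cone {R *v p | p. \<forall>a. p $ a \<ge> 0}" and x: "\<And>a. x $ a > 0"
  shows "R *v x \<noteq> 0"
proof
  assume Rx: "R *v x = 0"
  let ?K = "{R *v p | p. \<forall>a. p $ a \<ge> 0}"
  have "?K \<noteq> {0}" using cone unfolding proper_cone_def by (metis interior_singleton)
  moreover have "0 \<in> ?K" by (auto intro!: exI[of _ 0])
  ultimately obtain p where p: "\<forall>a. p $ a \<ge> 0" "R *v p \<noteq> 0" by blast
  define t where "t = (\<Sum>a\<in>UNIV. p $ a / x $ a)"
  define q where "q = t *\<^sub>R x - p"
  have "p $ a / x $ a \<le> t" for a unfolding t_def
    by (rule member_le_sum) (auto simp: p x less_imp_le)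
  hence qge: "q $ a \<ge> 0" for a using x[of a] pos_divide_le_eq[of "x $ a" "p $ a" t] by (simp add: q_def)
  have Rq: "R *v q = - (R *v p)" by (simp add: q_def algebra_simps Rx)
  have "- (R *v p) \<in> ?K" unfolding mem_Collect_eq by (intro exI[of _ q]) (use qge Rq in auto)
  moreover have "R *v p \<in> ?K" using p by blast
  ultimately show False using cone p(2) unfolding proper_cone_def by blast
qed

lemma ker_dim_eq:
  fixes M :: "real^'n^'n"
  shows "dim {r. M *v r = 0} = dim {h. h v* M = 0}"
proof -
  have eq1: "{y. \<forall>x. orthogonal (M *v x) y} = {h. h v* M = 0}"
  proof -
    have "(\<forall>z. orthogonal (M *v z) y) \<longleftrightarrow> y v* M = 0" for y
    proof
      assume "\<forall>z. orthogonal (M *v z) y"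
      hence "inner (y v* M) (y v* M) = 0"
        by (metis dot_lmul_matrix inner_commute orthogonal_def)
      thus "y v* M = 0" by simp
    qed (simp add: orthogonal_def inner_commute dot_lmul_matrix[symmetric])
    thus ?thesis by auto
  qed
  have eq2: "{y. \<forall>x. orthogonal (x v* M) y} = {r. M *v r = 0}"
  proof -
    have "(\<forall>z. orthogonal (z v* M) y) \<longleftrightarrow> M *v y = 0" for y
    proof
      assume "\<forall>z. orthogonal (z v* M) y"
      hence "inner (M *v y) (M *v y) = 0"
        by (metis dot_lmul_matrix orthogonal_def)
      thus "M *v y = 0" by simp
    qed (simp add: orthogonal_def dot_lmul_matrix)
    thus ?thesis by auto
  qed
  have d1: "dim {h. h v* M = 0} + rank M = dim (UNIV::(real^'n) set)"
    using dim_subspace_orthogonal_to_vectors[of "range (\<lambda>x. M *v x)" UNIV]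
    by (simp add: eq1 rank_dim_range linear_subspace_image[OF matrix_vector_mul_linear])
  have d2: "dim {r. M *v r = 0} + rank (transpose M) = dim (UNIV::(real^'n) set)"
    using dim_subspace_orthogonal_to_vectors[of "range (\<lambda>x. transpose M *v x)" UNIV]
      linear_subspace_image[OF matrix_vector_mul_linear[of "transpose M"], of UNIV]
    by (simp add: eq2 rank_dim_range linear_subspace_image[OF matrix_vector_mul_linear])
  show ?thesis using d1 d2 rank_transpose[of M] by simp
qed

lemma dim1_prop:
  fixes S :: "(real^'n) set"
  assumes "subspace S" "dim S \<le> 1" "u \<in> S" "u \<noteq> 0" "r \<in> S"
  shows "\<exists>c. r = c *\<^sub>R u"
proof (rule ccontr)
  assume "\<nexists>c. r = c *\<^sub>R u"
  hence ns: "r \<notin> span {u}" by (auto simp: span_singleton)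
  have "independent {u}" using assms(4) by (simp add: independent_insert)
  hence "independent {r, u}" using ns by (simp add: independent_insert)
  hence "card {r, u} \<le> dim S" using assms by (intro independent_card_le_dim) auto
  moreover have "r \<noteq> u" using ns by (metis span_base insertI1)
  ultimately show False using assms(2) by simp
qed

lemma per_i:
  fixes A :: "real^'n^'n" and R :: "real^'m^'n" and P :: "real^'m^'m" and h :: "real^'n"
  assumes dom: "strictly_dominant_eig A lam"
    and h: "h \<noteq> 0" "h v* A = lam *\<^sub>R h"
    and inter: "(alpha *\<^sub>R mat 1 + A) ** R = R ** P"
    and P: "\<And>a b. P $ a $ b > 0"
    and inj: "\<And>h. h v* R = 0 \<Longrightarrow> h = 0"
    and Rx0: "\<And>x. (\<And>a. x $ a > 0) \<Longrightarrow> R *v x \<noteq> 0"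
  obtains x where "\<And>a. x $ a > 0" "A *v (R *v x) = lam *\<^sub>R (R *v x)"
    "\<And>h'. h' \<noteq> 0 \<Longrightarrow> h' v* A = lam *\<^sub>R h' \<Longrightarrow> (\<forall>a. (h' v* R) $ a > 0) \<or> (\<forall>a. (h' v* R) $ a < 0)"
proof -
  obtain x rho where x: "\<And>a. x $ a > 0" and Px: "P *v x = rho *\<^sub>R x" and rho: "rho > 0"
    using perron_exists[OF P] by blast
  let ?B = "alpha *\<^sub>R mat 1 + A"
  have Bv: "?B *v v = alpha *\<^sub>R v + A *v v" for v
    by (simp add: matrix_vector_mult_add_rdistrib scaleR_matrix_vector_assoc[symmetric])
  have "?B *v (R *v x) = rho *\<^sub>R (R *v x)"
  proof -
    have "?B *v (R *v x) = (?B ** R) *v x" by (simp add: matrix_vector_mul_assoc)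
    also have "\<dots> = R *v (P *v x)" by (simp add: inter matrix_vector_mul_assoc)
    also have "\<dots> = rho *\<^sub>R (R *v x)" by (simp add: Px matrix_vector_mult_scaleR)
    finally show ?thesis .
  qed
  hence "alpha *\<^sub>R (R *v x) + A *v (R *v x) = rho *\<^sub>R (R *v x)" by (simp only: Bv)
  hence Av: "A *v (R *v x) = (rho - alpha) *\<^sub>R (R *v x)" by (simp add: algebra_simps)
  have root: "poly (charpoly A) (complex_of_real (rho - alpha)) = 0"
    using eig_root[OF Rx0[OF x] Av] .
  have yP: "(h' v* R) v* P = (alpha + lam) *\<^sub>R (h' v* R)" if "h' v* A = lam *\<^sub>R h'" for h'
  proof -
    have hB: "h' v* ?B = (alpha + lam) *\<^sub>R h'"
      using that by (simp add: vector_matrix_mult_add_rdistrib vector_scaleR_matrix_ac scaleR_add_left)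
    have "(h' v* R) v* P = h' v* (?B ** R)" by (simp add: vector_matrix_mul_assoc inter)
    also have "\<dots> = (alpha + lam) *\<^sub>R (h' v* R)"
      by (simp add: vector_matrix_mul_assoc[symmetric] hB scaleR_vector_matrix_assoc)
    finally show ?thesis .
  qed
  have hR0: "h v* R \<noteq> 0" using inj h(1) by blast
  have "\<bar>alpha + lam\<bar> \<le> rho" using left_eig(1)[OF P x Px hR0 yP[OF h(2)]] .
  hence le: "lam \<le> rho - alpha" by simp
  have "rho - alpha = lam"
  proof (rule ccontr)
    assume ne: "rho - alpha \<noteq> lam"
    hence "Re (complex_of_real (rho - alpha)) < lam" using dom root
      unfolding strictly_dominant_eig_def by (metis of_real_eq_iff)
    thus False using le by simp
  qed
  hence br: "alpha + lam = rho" by simp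
  show ?thesis
  proof (rule that[OF x])
    show "A *v (R *v x) = lam *\<^sub>R (R *v x)" using Av \<open>rho - alpha = lam\<close> by simp
    fix h' :: "real^'n" assume "h' \<noteq> 0" "h' v* A = lam *\<^sub>R h'"
    thus "(\<forall>a. (h' v* R) $ a > 0) \<or> (\<forall>a. (h' v* R) $ a < 0)"
      using left_eig(2)[OF P x Px _ yP br] inj by blast
  qed
qed

lemma right_prop:
  fixes A :: "real^'n^'n" and R :: "real^'m^'n"
  assumes sgn: "\<And>h'. h' \<noteq> 0 \<Longrightarrow> h' v* A = lam *\<^sub>R h' \<Longrightarrow> (\<forall>a. (h' v* R) $ a > 0) \<or> (\<forall>a. (h' v* R) $ a < 0)"
   and h0: "h0 \<noteq> 0" "h0 v* A = lam *\<^sub>R h0"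
   and u: "u \<noteq> 0" "A *v u = lam *\<^sub>R u" and r: "A *v r = lam *\<^sub>R r"
  shows "\<exists>c. r = c *\<^sub>R u"
proof -
  define M where "M = A - lam *\<^sub>R mat 1"
  have Ml: "h v* M = 0 \<longleftrightarrow> h v* A = lam *\<^sub>R h" for h
    by (simp add: M_def vector_matrix_mult_diff_rdistrib vector_scaleR_matrix_ac)
  have Mr: "M *v v = 0 \<longleftrightarrow> A *v v = lam *\<^sub>R v" for v
    by (simp add: M_def matrix_vector_mult_diff_rdistrib scaleR_matrix_vector_assoc[symmetric])
  define a0 :: 'm where "a0 = undefined"
  have y0: "(h0 v* R) $ a0 \<noteq> 0" using sgn[OF h0] by (metis less_irrefl)
  have sub: "{h. h v* M = 0} \<subseteq> span {h0}"
  proof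
    fix h assume "h \<in> {h. h v* M = 0}"
    hence hA: "h v* A = lam *\<^sub>R h" using Ml by simp
    define t where "t = (h v* R) $ a0 / (h0 v* R) $ a0"
    define h' where "h' = h - t *\<^sub>R h0"
    have h'A: "h' v* A = lam *\<^sub>R h'"
      using hA h0(2) by (simp add: h'_def vector_matrix_mult_diff_distrib scaleR_vector_matrix_assoc algebra_simps)
    have "(h' v* R) $ a0 = 0"
      using y0 by (simp add: h'_def t_def vector_matrix_mult_diff_distrib scaleR_vector_matrix_assoc)
    hence "h' = 0" using sgn[OF _ h'A] by (metis less_irrefl)
    hence "h = t *\<^sub>R h0" by (simp add: h'_def)
    thus "h \<in> span {h0}" by (simp add: span_singleton) blast
  qed
  have "dim {h. h v* M = 0} \<le> 1"
    using dim_subset[OF sub] h0(1) by simp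
  hence d: "dim {v. M *v v = 0} \<le> 1" using ker_dim_eq[of M] by simp
  have subsp: "subspace {v. M *v v = 0}"
    using linear_subspace_kernel[OF matrix_vector_mul_linear[of M]] by simp
  show ?thesis
    using dim1_prop[OF subsp d _ u(1)] u r Mr by simp
qed
lemma sign_final:
  fixes F G :: "nat \<Rightarrow> nat \<Rightarrow> real" and a b :: "nat \<Rightarrow> real"
  assumes FG: "\<And>j k. j\<in>I \<Longrightarrow> k\<in>I \<Longrightarrow> F j k = a j * b k * G j k"
    and G: "\<And>j k. j\<in>I \<Longrightarrow> k\<in>I \<Longrightarrow> G j k > 0"
    and a: "\<And>j. j\<in>I \<Longrightarrow> a j \<noteq> 0" and b: "\<And>k. k\<in>I \<Longrightarrow> b k \<noteq> 0"
    and io: "io \<in> I" and F1: "\<And>k. k\<in>I \<Longrightarrow> F io k \<ge> 0" and Fd: "\<And>j. j\<in>I \<Longrightarrow> F j j \<ge> 0"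
    and jk: "j \<in> I" "k \<in> I"
  shows "F j k > 0"
proof -
  have pos: "a j' * b k' > 0" if "j' \<in> I" "k' \<in> I" "F j' k' \<ge> 0" for j' k'
  proof -
    have "a j' * b k' * G j' k' \<ge> 0" using that FG by simp
    hence "a j' * b k' \<ge> 0" using G[OF that(1,2)] by (simp add: zero_le_mult_iff)
    moreover have "a j' * b k' \<noteq> 0" using a b that by simp
    ultimately show ?thesis by (simp add: less_le)
  qed
  have X: "a j * b j > 0" using pos jk Fd by simp
  have Y: "a io * b j > 0" using pos jk io F1 by simp
  have Z: "a io * b k > 0" using pos jk io F1 by simp
  have "(a j * b k) * (a io * b j) = (a j * b j) * (a io * b k)" by (simp add: mult_ac)
  hence "(a j * b k) * (a io * b j) > 0" using X Z by (metis mult_pos_pos)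
  hence "a j * b k > 0" using Y by (simp add: zero_less_mult_iff)
  thus ?thesis using FG[OF jk] G[OF jk] by simp
qed

lemma inner_sign:
  fixes y x :: "real^'m"
  assumes "(\<forall>a. y $ a > 0) \<or> (\<forall>a. y $ a < 0)" "\<And>a. x $ a > 0"
  shows "(if (\<forall>a. y $ a > 0) then 1 else -1) * inner y x > 0"
proof (cases "\<forall>a. y $ a > 0")
  case True
  hence "inner y x > 0" using assms(2) unfolding inner_vec_def by (intro sum_pos) auto
  thus ?thesis using True by simp
next
  case False
  hence n: "\<forall>a. y $ a < 0" using assms(1) by blast
  have "(\<Sum>a\<in>UNIV. (- y $ a) * x $ a) > 0" using n assms(2) by (intro sum_pos) (auto simp: mult_neg_pos)
  hence "- inner y x > 0" unfolding inner_vec_def by (simp add: sum_negf)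
  thus ?thesis using False by simp
qed

theorem proposition7:
  fixes l :: nat
    and A :: "nat \<Rightarrow> real^'n^'n"
    and lam :: "nat \<Rightarrow> real"
    and rhat hhat rt ht :: "nat \<Rightarrow> real^'n"
    and R :: "real^'m^'n"
    and alpha :: "nat \<Rightarrow> real"
    and P :: "nat \<Rightarrow> real^'m^'m"
  assumes dom: "\<And>i. i \<in> {1..l} \<Longrightarrow> strictly_dominant_eig (A i) (lam i)"
    and rhat: "\<And>i. i \<in> {1..l} \<Longrightarrow> rhat i \<noteq> 0 \<and> A i *v rhat i = lam i *\<^sub>R rhat i"
    and hhat: "\<And>i. i \<in> {1..l} \<Longrightarrow> hhat i \<noteq> 0 \<and> hhat i v* A i = lam i *\<^sub>R hhat i"
    and ht1: "ht 1 = hhat 1"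
    and rt: "\<And>k. k \<in> {1..l} \<Longrightarrow> (rt k = rhat k \<or> rt k = - rhat k) \<and> inner (ht 1) (rt k) \<ge> 0"
    and ht: "\<And>j. j \<in> {2..l} \<Longrightarrow> (ht j = hhat j \<or> ht j = - hhat j) \<and> inner (ht j) (rt j) \<ge> 0"
    and cone: "proper_cone {R *v p | p. \<forall>a. p $ a \<ge> 0}"
    and Ppos: "\<And>i a b. i \<in> {1..l} \<Longrightarrow> P i $ a $ b > 0"
    and inter: "\<And>i. i \<in> {1..l} \<Longrightarrow> (alpha i *\<^sub>R mat 1 + A i) ** R = R ** P i"
  shows "\<forall>j\<in>{1..l}. \<forall>k\<in>{1..l}. inner (ht j) (rt k) > 0"
proof -
  let ?I = "{1..l}"
  have inj: "\<And>h. h v* R = 0 \<Longrightarrow> h = 0"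
    using cone_inj cone unfolding proper_cone_def by blast
  have Rx0: "\<And>x. (\<And>a. x $ a > 0) \<Longrightarrow> R *v x \<noteq> 0" using cone_Rx[OF cone] by blast
  have "\<forall>i\<in>?I. \<exists>x. (\<forall>a. x $ a > 0) \<and> A i *v (R *v x) = lam i *\<^sub>R (R *v x) \<and>
      (\<forall>h'. h' \<noteq> 0 \<longrightarrow> h' v* A i = lam i *\<^sub>R h' \<longrightarrow> (\<forall>a. (h' v* R) $ a > 0) \<or> (\<forall>a. (h' v* R) $ a < 0))"
  proof
    fix i assume i: "i \<in> ?I"
    obtain x where "\<And>a. x $ a > 0" "A i *v (R *v x) = lam i *\<^sub>R (R *v x)"
      "\<And>h'. h' \<noteq> 0 \<Longrightarrow> h' v* A i = lam i *\<^sub>R h' \<Longrightarrow> (\<forall>a. (h' v* R) $ a > 0) \<or> (\<forall>a. (h' v* R) $ a < 0)"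
      using per_i[OF dom[OF i] conjunct1[OF hhat[OF i]] conjunct2[OF hhat[OF i]] inter[OF i] Ppos[OF i] inj Rx0]
      by blast
    thus "\<exists>x. (\<forall>a. x $ a > 0) \<and> A i *v (R *v x) = lam i *\<^sub>R (R *v x) \<and>
      (\<forall>h'. h' \<noteq> 0 \<longrightarrow> h' v* A i = lam i *\<^sub>R h' \<longrightarrow> (\<forall>a. (h' v* R) $ a > 0) \<or> (\<forall>a. (h' v* R) $ a < 0))"
      by blast
  qed
  then obtain X where X: "\<And>i. i \<in> ?I \<Longrightarrow> (\<forall>a. X i $ a > 0) \<and> A i *v (R *v X i) = lam i *\<^sub>R (R *v X i) \<and>
      (\<forall>h'. h' \<noteq> 0 \<longrightarrow> h' v* A i = lam i *\<^sub>R h' \<longrightarrow> (\<forall>a. (h' v* R) $ a > 0) \<or> (\<forall>a. (h' v* R) $ a < 0))"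
    by metis
  have sgnh: "(\<forall>a. (hhat j v* R) $ a > 0) \<or> (\<forall>a. (hhat j v* R) $ a < 0)" if "j \<in> ?I" for j
    using X[OF that] hhat[OF that] by blast
  have "\<forall>k\<in>?I. \<exists>c. rhat k = c *\<^sub>R (R *v X k)"
  proof
    fix k assume k: "k \<in> ?I"
    show "\<exists>c. rhat k = c *\<^sub>R (R *v X k)"
      using right_prop[of "A k" "lam k" R "hhat k" "R *v X k" "rhat k"] X[OF k] hhat[OF k] rhat[OF k] Rx0[of "X k"]
      by blast
  qed
  then obtain C where C: "\<And>k. k \<in> ?I \<Longrightarrow> rhat k = C k *\<^sub>R (R *v X k)" by metis
  have C0: "C k \<noteq> 0" if "k \<in> ?I" for k using C[OF that] rhat[OF that] by auto
  define G where "G j k = inner (hhat j v* R) (X k)" for j k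
  define \<sigma> where "\<sigma> j = (if (\<forall>a. (hhat j v* R) $ a > 0) then 1 else (-1::real))" for j
  have \<sigma>G: "\<sigma> j * G j k > 0" if "j \<in> ?I" "k \<in> ?I" for j k
    unfolding \<sigma>_def G_def using inner_sign[OF sgnh[OF that(1)]] X[OF that(2)] by blast
  have \<sigma>sq: "\<sigma> j * \<sigma> j = 1" for j by (simp add: \<sigma>_def)
  have "\<forall>j\<in>?I. \<exists>d. (d = 1 \<or> d = -1) \<and> ht j = d *\<^sub>R hhat j"
  proof
    fix j assume j: "j \<in> ?I"
    show "\<exists>d. (d = 1 \<or> d = -1) \<and> ht j = d *\<^sub>R hhat j"
    proof (cases "j = 1")
      case True thus ?thesis using ht1 by (intro exI[of _ 1]) simp
    next
      case False
      hence "j \<in> {2..l}" using j by auto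
      thus ?thesis using ht by (metis scaleR_minus1_left scaleR_one)
    qed
  qed
  then obtain D where D: "\<And>j. j \<in> ?I \<Longrightarrow> (D j = 1 \<or> D j = -1) \<and> ht j = D j *\<^sub>R hhat j" by metis
  have "\<forall>k\<in>?I. \<exists>e. (e = 1 \<or> e = -1) \<and> rt k = e *\<^sub>R rhat k"
    using rt by (metis scaleR_minus1_left scaleR_one)
  then obtain E where E: "\<And>k. k \<in> ?I \<Longrightarrow> (E k = 1 \<or> E k = -1) \<and> rt k = E k *\<^sub>R rhat k" by metis
  define F where "F j k = inner (ht j) (rt k)" for j k
  have FG: "F j k = (D j * \<sigma> j) * (E k * C k) * (\<sigma> j * G j k)" if "j \<in> ?I" "k \<in> ?I" for j k
  proof -
    have "F j k = D j * E k * C k * G j k"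
      using D[OF that(1)] E[OF that(2)] C[OF that(2)]
      by (simp add: F_def G_def dot_lmul_matrix)
    also have "\<dots> = D j * E k * C k * ((\<sigma> j * \<sigma> j) * G j k)" using \<sigma>sq by simp
    finally show ?thesis by (simp add: mult_ac)
  qed
  show ?thesis
  proof (intro ballI)
    fix j k assume jk: "j \<in> ?I" "k \<in> ?I"
    have l1: "1 \<in> ?I" using jk by auto
    have "F j k > 0"
    proof (rule sign_final[where I = ?I and a = "\<lambda>j. D j * \<sigma> j" and b = "\<lambda>k. E k * C k"
          and G = "\<lambda>j k. \<sigma> j * G j k" and io = 1])
      show "\<And>j k. j \<in> ?I \<Longrightarrow> k \<in> ?I \<Longrightarrow> F j k = D j * \<sigma> j * (E k * C k) * (\<sigma> j * G j k)"
        using FG by blast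
      show "\<And>j k. j \<in> ?I \<Longrightarrow> k \<in> ?I \<Longrightarrow> \<sigma> j * G j k > 0" using \<sigma>G by blast
      show "D j * \<sigma> j \<noteq> 0" if "j \<in> ?I" for j
      proof -
        have "D j \<noteq> 0" using D[OF that] by auto
        moreover have "\<sigma> j \<noteq> 0" by (simp add: \<sigma>_def)
        ultimately show ?thesis by simp
      qed
      show "\<And>k. k \<in> ?I \<Longrightarrow> E k * C k \<noteq> 0" using E C0 by fastforce
      show "1 \<in> ?I" by fact
      show "\<And>k. k \<in> ?I \<Longrightarrow> F 1 k \<ge> 0" using rt by (simp add: F_def)
      show "\<And>j. j \<in> ?I \<Longrightarrow> F j j \<ge> 0"
      proof -
        fix j assume j: "j \<in> ?I"
        show "F j j \<ge> 0"
        proof (cases "j = 1")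
          case True thus ?thesis using rt[OF j] by (simp add: F_def)
        next
          case False thus ?thesis using ht[of j] j by (simp add: F_def)
        qed
      qed
    qed (use jk in auto)
    thus "inner (ht j) (rt k) > 0" by (simp add: F_def)
  qed
qed
end
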